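(* Let $n\in\mathbb N$ and let $f(z)=\sum_{j\ge0}a_jz^j$ be extremal for $M_n$ with $a_0>0$. Then $a_0\ge e^{-2n}$.
   Context: $\mathbb D$ is the open unit disc; $\mathcal B_0=\{f$ holomorphic on $\mathbb D: 0<|f|\le1\}$; $M_n(f)=\mathrm{Re}\,a_n$; $f\in\mathcal B_0$ is extremal for $M_n$ if $M_n(f)\ge M_n(F)$ for all $F\in\mathcal B_0$. *)

theory Defs
  imports "HOL-Complex_Analysis.Complex_Analysis"
begin

definition B0 :: "(complex \<Rightarrow> complex) set" where
  "B0 = {f. f holomorphic_on ball 0 1 \<and> (\<forall>z\<in>ball 0 1. 0 < norm (f z) \<and> norm (f z) \<le> 1)}"

definition taylor_coeff :: "nat \<Rightarrow> (complex \<Rightarrow> complex) \<Rightarrow> complex" where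
  "taylor_coeff n f = (deriv ^^ n) f 0 / of_nat (fact n)"

definition M :: "nat \<Rightarrow> (complex \<Rightarrow> complex) \<Rightarrow> real" where
  "M n f = Re (taylor_coeff n f)"

definition extremal :: "nat \<Rightarrow> (complex \<Rightarrow> complex) \<Rightarrow> bool" where
  "extremal n f \<longleftrightarrow> f \<in> B0 \<and> (\<forall>F\<in>B0. M n F \<le> M n f)"

end

theory Submission
  imports Defs
begin


lemma tc_mult:
  assumes "F holomorphic_on ball 0 1" "G holomorphic_on ball 0 1"
  shows "taylor_coeff n (\<lambda>z. F z * G z) = (\<Sum>i=0..n. taylor_coeff i F * taylor_coeff (n-i) G)"
proof -
  have "(deriv ^^ n) (\<lambda>z. F z * G z) 0 = (\<Sum>i = 0..n. of_nat (n choose i) * (deriv ^^ i) F 0 * (deriv ^^ (n-i)) G 0)"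
    by (rule higher_deriv_mult[OF assms]) auto
  then have "taylor_coeff n (\<lambda>z. F z * G z) = (\<Sum>i = 0..n. of_nat (n choose i) * (deriv ^^ i) F 0 * (deriv ^^ (n-i)) G 0) / fact n"
    by (simp add: taylor_coeff_def)
  also have "\<dots> = (\<Sum>i = 0..n. of_nat (n choose i) * (deriv ^^ i) F 0 * (deriv ^^ (n-i)) G 0 / fact n)"
    by (simp add: sum_divide_distrib)
  also have "\<dots> = (\<Sum>i=0..n. taylor_coeff i F * taylor_coeff (n-i) G)"
  proof (rule sum.cong[OF refl])
    fix i assume "i \<in> {0..n}"
    then have "i \<le> n" by simp
    then show "of_nat (n choose i) * (deriv ^^ i) F 0 * (deriv ^^ (n-i)) G 0 / fact n = taylor_coeff i F * taylor_coeff (n-i) G"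
      by (simp add: binomial_fact taylor_coeff_def field_simps)
  qed
  finally show ?thesis .
qed

lemma tc_rot:
  assumes "h holomorphic_on ball 0 1" "norm u = 1"
  shows "taylor_coeff k (\<lambda>z. h (u * z)) = u ^ k * taylor_coeff k h"
proof -
  have "(deriv ^^ k) (\<lambda>w. h (u*w + 0)) 0 = u^k * (deriv ^^ k) h (u*0 + 0)"
    by (rule higher_deriv_compose_linear'[OF assms(1), where S="ball 0 1"]) (auto simp: norm_mult assms(2))
  then show ?thesis by (simp add: taylor_coeff_def)
qed

lemma tc_cauchy:
  assumes "G holomorphic_on ball 0 1"
  shows "((\<lambda>z. G z / z ^ Suc n) has_contour_integral (2 * pi * \<i> * taylor_coeff n G)) (circlepath 0 (1/2))"
proof -
  have "continuous_on (cball 0 (1/2)) G"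
    by (rule holomorphic_on_imp_continuous_on, rule holomorphic_on_subset[OF assms]) auto
  moreover have "G holomorphic_on ball 0 (1/2)"
    by (rule holomorphic_on_subset[OF assms]) auto
  ultimately have "((\<lambda>u. G u / (u-0) ^ (Suc n)) has_contour_integral ((2 * pi * \<i>) / (fact n) * (deriv ^^ n) G 0)) (circlepath 0 (1/2))"
    by (intro Cauchy_has_contour_integral_higher_derivative_circlepath) auto
  then show ?thesis by (simp add: taylor_coeff_def)
qed

lemma exp_quad: "norm (z::complex) \<le> 1 \<Longrightarrow> norm (exp z - 1 - z) \<le> 3 * norm z ^ 2"
proof -
  assume a: "norm z \<le> 1"
  have "norm (exp z - (\<Sum>i\<le>1. z ^ i / fact i)) \<le> exp (norm z) * (norm z ^ Suc 1) / fact 1"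
    by (rule Taylor_exp_field)
  moreover have "(\<Sum>i\<le>1. z ^ i / fact i) = 1 + z" by simp
  moreover have "exp (norm z) \<le> 3"
    using a by (meson exp_le_cancel_iff order_trans exp_le)
  ultimately have "norm (exp z - 1 - z) \<le> exp (norm z) * norm z ^ 2"
    by (simp add: diff_diff_eq power2_eq_square)
  also have "\<dots> \<le> 3 * norm z ^ 2"
    using \<open>exp (norm z) \<le> 3\<close> by (intro mult_right_mono) auto
  finally show ?thesis .
qed



lemma B0_hol: "F \<in> B0 \<Longrightarrow> F holomorphic_on ball 0 1"
  by (simp add: B0_def)

lemma variation:
  assumes extr: "extremal n f"
    and hh: "h holomorphic_on ball 0 1" and fe: "\<And>z. z \<in> ball 0 1 \<Longrightarrow> f z = exp (h z)"
    and dh: "d holomorphic_on ball 0 1"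
    and dl: "\<delta> > 0" and inB: "\<And>s. 0 < s \<Longrightarrow> s < \<delta> \<Longrightarrow> (\<lambda>z. exp (h z + of_real s * d z)) \<in> B0"
  shows "Re (taylor_coeff n (\<lambda>z. f z * d z)) \<le> 0"
proof -
  have fB: "f \<in> B0" and fmax: "\<And>F. F \<in> B0 \<Longrightarrow> M n F \<le> M n f"
    using extr by (auto simp: extremal_def)
  have fh: "f holomorphic_on ball 0 1" using fB by (simp add: B0_def)
  have fle: "\<And>z. z \<in> ball 0 1 \<Longrightarrow> norm (f z) \<le> 1" using fB by (simp add: B0_def)
  have "compact (d ` cball 0 (1/2))"
    by (rule compact_continuous_image, rule holomorphic_on_imp_continuous_on,
        rule holomorphic_on_subset[OF dh]) auto
  then obtain B where B: "B > 0" "\<And>z. z \<in> cball 0 (1/2) \<Longrightarrow> norm (d z) \<le> B"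
    using compact_imp_bounded bounded_pos by (metis image_eqI)
  define K where "K = 3 * 2 ^ n * B ^ 2"
  have fdh: "(\<lambda>z. f z * d z) holomorphic_on ball 0 1" using fh dh by (intro holomorphic_intros)
  have key: "Re (taylor_coeff n (\<lambda>z. f z * d z)) \<le> K * s" if s: "0 < s" "s < \<delta>" "s \<le> 1 / B" for s
  proof -
    define G where "G = (\<lambda>z. exp (h z + of_real s * d z))"
    define E where "E = (\<lambda>z. G z - f z - of_real s * (f z * d z))"
    have GB: "G \<in> B0" unfolding G_def using inB s by auto
    have Gh: "G holomorphic_on ball 0 1" using GB by (simp add: B0_def)
    have Eh: "E holomorphic_on ball 0 1" unfolding E_def using Gh fh fdh dh by (intro holomorphic_intros)
    have i1: "((\<lambda>z. E z / z ^ Suc n) has_contour_integral (2 * pi * \<i> * taylor_coeff n E)) (circlepath 0 (1/2))"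
      by (rule tc_cauchy[OF Eh])
    have i2: "((\<lambda>z. G z / z ^ Suc n - f z / z ^ Suc n - of_real s * ((f z * d z) / z ^ Suc n)) has_contour_integral
        (2 * pi * \<i> * taylor_coeff n G - 2 * pi * \<i> * taylor_coeff n f - of_real s * (2 * pi * \<i> * taylor_coeff n (\<lambda>z. f z * d z)))) (circlepath 0 (1/2))"
      by (intro has_contour_integral_diff has_contour_integral_lmul tc_cauchy Gh fh fdh)
    have eqf: "(\<lambda>z. G z / z ^ Suc n - f z / z ^ Suc n - of_real s * ((f z * d z) / z ^ Suc n)) = (\<lambda>z. E z / z ^ Suc n)"
      by (rule ext) (simp add: E_def diff_divide_distrib add_divide_distrib times_divide_eq_right)
    have i3: "((\<lambda>z. E z / z ^ Suc n) has_contour_integral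
        (2 * pi * \<i> * taylor_coeff n G - 2 * pi * \<i> * taylor_coeff n f - of_real s * (2 * pi * \<i> * taylor_coeff n (\<lambda>z. f z * d z)))) (circlepath 0 (1/2))"
      using i2 unfolding eqf .
    have "2 * pi * \<i> * taylor_coeff n E = 2 * pi * \<i> * taylor_coeff n G - 2 * pi * \<i> * taylor_coeff n f - of_real s * (2 * pi * \<i> * taylor_coeff n (\<lambda>z. f z * d z))"
      by (rule has_contour_integral_unique[OF i1 i3])
    then have "(2 * pi * \<i>) * taylor_coeff n E = (2 * pi * \<i>) * (taylor_coeff n G - taylor_coeff n f - of_real s * taylor_coeff n (\<lambda>z. f z * d z))"
      by (simp only: right_diff_distrib mult_ac)
    then have Eeq: "taylor_coeff n E = taylor_coeff n G - taylor_coeff n f - of_real s * taylor_coeff n (\<lambda>z. f z * d z)"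
      by (subst (asm) mult_left_cancel) auto
    have bnd: "norm (E z / z ^ Suc n) \<le> 3 * (s * B) ^ 2 * 2 ^ Suc n" if z: "norm (z - 0) = 1/2" for z
    proof -
      have zb: "z \<in> ball 0 1" "z \<in> cball 0 (1/2)" using z by auto
      have Ez: "E z = f z * (exp (of_real s * d z) - 1 - of_real s * d z)"
        using fe[OF zb(1)] by (simp add: E_def G_def exp_add algebra_simps)
      have ds: "norm (of_real s * d z) \<le> s * B"
        using B(2)[OF zb(2)] s by (simp add: norm_mult mult_left_mono)
      have "s * B \<le> 1" using s B by (simp add: field_simps)
      have "norm (exp (of_real s * d z) - 1 - of_real s * d z) \<le> 3 * norm (of_real s * d z) ^ 2"
        by (rule exp_quad) (use ds \<open>s * B \<le> 1\<close> in auto)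
      also have "\<dots> \<le> 3 * (s * B) ^ 2"
        using ds by (intro mult_left_mono power_mono) auto
      finally have e1: "norm (exp (of_real s * d z) - 1 - of_real s * d z) \<le> 3 * (s * B) ^ 2" .
      have nEz: "norm (E z) \<le> 3 * (s * B) ^ 2"
      proof -
        have "norm (f z) * norm (exp (of_real s * d z) - 1 - of_real s * d z) \<le> 1 * (3 * (s * B) ^ 2)"
          by (rule mult_mono) (use fle[OF zb(1)] e1 in auto)
        then show ?thesis unfolding Ez norm_mult by simp
      qed
      moreover have "norm (z ^ Suc n) = (1/2) ^ Suc n"
      proof -
        have "norm z = 1/2" using z by simp
        then show ?thesis by (simp only: norm_power)
      qed
      ultimately have "norm (E z / z ^ Suc n) = norm (E z) * 2 ^ Suc n"
        by (simp add: norm_divide power_one_over)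
      also have "\<dots> \<le> 3 * (s * B) ^ 2 * 2 ^ Suc n"
        by (rule mult_right_mono) (use nEz in auto)
      finally show ?thesis .
    qed
    have "norm (2 * pi * \<i> * taylor_coeff n E) \<le> 3 * (s * B) ^ 2 * 2 ^ Suc n * (2 * pi * (1/2))"
      by (rule has_contour_integral_bound_circlepath[OF i1]) (use bnd in auto)
    then have "2 * pi * norm (taylor_coeff n E) \<le> 3 * (s * B) ^ 2 * 2 ^ Suc n * pi"
      by (simp add: norm_mult)
    then have nE: "norm (taylor_coeff n E) \<le> K * s ^ 2"
      by (simp add: K_def power_mult_distrib field_simps)
    have "Re (taylor_coeff n G) \<le> Re (taylor_coeff n f)"
      using fmax[OF GB] by (simp add: M_def)
    moreover have "Re (taylor_coeff n E) \<ge> - (K * s ^ 2)"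
      using nE abs_Re_le_cmod[of "taylor_coeff n E"] by linarith
    moreover have "Re (taylor_coeff n E) = Re (taylor_coeff n G) - Re (taylor_coeff n f) - s * Re (taylor_coeff n (\<lambda>z. f z * d z))"
      using Eeq by simp
    ultimately have "s * Re (taylor_coeff n (\<lambda>z. f z * d z)) \<le> K * s ^ 2"
      by linarith
    then show ?thesis using s by (simp add: power2_eq_square)
  qed
  show ?thesis
  proof (rule ccontr)
    assume "\<not> ?thesis"
    then have pos: "Re (taylor_coeff n (\<lambda>z. f z * d z)) > 0" by simp
    have Kp: "K > 0" using B by (simp add: K_def)
    define s where "s = Min {\<delta>/2, 1/B, Re (taylor_coeff n (\<lambda>z. f z * d z)) / (2*K)}"
    have "s > 0" using dl B pos Kp by (simp add: s_def)
    moreover have "s < \<delta>" "s \<le> 1/B" "s \<le> Re (taylor_coeff n (\<lambda>z. f z * d z)) / (2*K)"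
      using dl by (auto simp: s_def)
    ultimately show False using key[of s] Kp pos by (simp add: field_simps)
  qed
qed



lemma cos_sum_zero:
  fixes m N :: nat
  assumes "1 \<le> m" "m < N"
  shows "(\<Sum>j<N. cos (real m * ((2 * real j + 1) * pi / real N))) = 0"
proof -
  define a where "a = real m * pi / real N"
  define F where "F = (\<lambda>j::nat. sin (2 * real m * real j * pi / real N))"
  have Np: "real N > 0" using assms by simp
  have a0: "0 < a" using assms Np by (simp add: a_def)
  have api: "a < pi" using assms Np by (simp add: a_def field_simps)
  have sa: "sin a > 0" using a0 api by (rule sin_gt_zero)
  have trm: "2 * sin a * cos (real m * ((2 * real j + 1) * pi / real N)) = F (Suc j) - F j" for j
  proof -
    define b where "b = real m * ((2 * real j + 1) * pi / real N)"
    have e1: "2 * real m * real (Suc j) * pi / real N = b + a"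
      using Np by (simp add: a_def b_def field_simps)
    have e2: "2 * real m * real j * pi / real N = b - a"
      using Np by (simp add: a_def b_def field_simps)
    have "F (Suc j) - F j = sin (b + a) - sin (b - a)"
      unfolding F_def e1 e2 by simp
    also have "\<dots> = 2 * sin a * cos b" by (simp add: sin_add sin_diff)
    finally show ?thesis by (simp add: b_def)
  qed
  have "2 * sin a * (\<Sum>j<N. cos (real m * ((2 * real j + 1) * pi / real N))) = (\<Sum>j<N. F (Suc j) - F j)"
    by (subst sum_distrib_left) (rule sum.cong[OF refl], rule trm)
  also have "\<dots> = F N - F 0" by (rule sum_lessThan_telescope)
  also have "F N = sin (real (2 * m) * pi)"
  proof -
    have "2 * real m * real N * pi / real N = real (2*m) * pi" using Np by simp
    then show ?thesis by (simp only: F_def)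
  qed
  also have "\<dots> = 0" by (rule sin_npi)
  finally show ?thesis using sa by (simp add: F_def)
qed

lemma cos_rec: "cos ((real m + 2) * x) + cos (real m * x) = 2 * cos ((real m + 1) * x) * cos x"
proof -
  have "(real m + 2) * x = (real m + 1) * x + x" "real m * x = (real m + 1) * x - x"
    by (simp_all add: algebra_simps)
  then show ?thesis by (simp only: cos_add cos_diff)
qed

lemma trig_key:
  fixes u :: "nat \<Rightarrow> real" and n :: nat
  assumes G: "\<And>x::real. (\<Sum>k=1..n. u k * (1 - cos (real k * x))) \<ge> 0"
  shows "(\<Sum>k=1..n. (2 * real k - 1) * u k) \<ge> 0"
proof -
  define N where "N = Suc n"
  define xs where "xs = (\<lambda>j::nat. (2 * real j + 1) * pi / real N)"
  define w where "w = (\<lambda>j. (1 + cos (xs j)) / (1 - cos (xs j)))"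
  define Q where "Q = (\<lambda>k::nat. \<Sum>j<N. (1 - cos (real k * xs j)) * w j)"
  define S where "S = (\<lambda>m::nat. \<Sum>j<N. cos (real m * xs j))"
  have Np: "real N > 0" by (simp add: N_def)
  have cpos: "1 - cos (xs j) > 0" if "j < N" for j
  proof -
    have "0 < xs j / 2" using Np by (simp add: xs_def)
    moreover have "xs j / 2 < pi"
    proof -
      have "2 * real j + 1 < 2 * real N" using that by simp
      then have "(2 * real j + 1) * pi < 2 * real N * pi" by simp
      then show ?thesis using Np by (simp add: xs_def field_simps)
    qed
    ultimately have "sin (xs j / 2) > 0" by (rule sin_gt_zero)
    moreover have "cos (xs j) = 1 - 2 * sin (xs j / 2) ^ 2"
      using cos_double_sin[of "xs j / 2"] by simp
    ultimately show ?thesis by simp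
  qed
  have wpos: "w j \<ge> 0" if "j < N" for j
  proof -
    have a: "0 \<le> 1 + cos (xs j)" using cos_ge_minus_one[of "xs j"] by linarith
    show ?thesis unfolding w_def by (rule divide_nonneg_pos[OF a cpos[OF that]])
  qed
  have S0: "S 0 = real N" by (simp add: S_def)
  have Sz: "S m = 0" if "1 \<le> m" "m < N" for m
    unfolding S_def xs_def by (rule cos_sum_zero[OF that])
  have Q0: "Q 0 = 0" by (simp add: Q_def)
  have Q1: "Q 1 = real N" if n1: "1 \<le> n"
  proof -
    have "Q 1 = (\<Sum>j<N. 1 + cos (xs j))"
      unfolding Q_def
    proof (rule sum.cong[OF refl])
      fix j assume "j \<in> {..<N}"
      then have c: "1 - cos (xs j) \<noteq> 0" using cpos[of j] by simp
      show "(1 - cos (real 1 * xs j)) * w j = 1 + cos (xs j)"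
        using c by (simp add: w_def)
    qed
    also have "\<dots> = real N + S 1" by (simp add: S_def sum.distrib)
    finally show ?thesis using Sz[of 1] n1 by (simp add: N_def)
  qed
  have rec: "Q (m + 2) = 2 * Q (m + 1) - Q m + 2 * S (m + 1) + S (m + 2) + S m" for m
  proof -
    have pt: "(1 - cos (real (m+2) * xs j)) * w j = 2 * (1 - cos (real (m+1) * xs j)) * w j - (1 - cos (real m * xs j)) * w j
        + 2 * cos (real (m+1) * xs j) + cos (real (m+2) * xs j) + cos (real m * xs j)" if "j < N" for j
    proof -
      have r: "cos ((real m + 2) * xs j) + cos (real m * xs j) = 2 * cos ((real m + 1) * xs j) * cos (xs j)"
        by (rule cos_rec)
      have wd: "w j * (1 - cos (xs j)) = 1 + cos (xs j)" using cpos[OF that] by (simp add: w_def)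
      have "(1 - cos ((real m + 2) * xs j)) * w j - 2 * (1 - cos ((real m + 1) * xs j)) * w j + (1 - cos (real m * xs j)) * w j
          = w j * (2 * cos ((real m + 1) * xs j) - (cos ((real m + 2) * xs j) + cos (real m * xs j)))"
        by (simp add: algebra_simps)
      also have "\<dots> = 2 * cos ((real m + 1) * xs j) * (w j * (1 - cos (xs j)))"
        unfolding r by (simp add: algebra_simps)
      also have "\<dots> = 2 * cos ((real m + 1) * xs j) + 2 * cos ((real m + 1) * xs j) * cos (xs j)"
        unfolding wd by (simp add: algebra_simps)
      also have "\<dots> = 2 * cos ((real m + 1) * xs j) + cos ((real m + 2) * xs j) + cos (real m * xs j)"
        unfolding r[symmetric] by simp
      finally show ?thesis by (simp add: algebra_simps)
    qed
    have "Q (m + 2) = (\<Sum>j<N. 2 * (1 - cos (real (m+1) * xs j)) * w j - (1 - cos (real m * xs j)) * w j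
        + 2 * cos (real (m+1) * xs j) + cos (real (m+2) * xs j) + cos (real m * xs j))"
      unfolding Q_def by (rule sum.cong[OF refl], rule pt) simp
    also have "\<dots> = 2 * Q (m + 1) - Q m + 2 * S (m + 1) + S (m + 2) + S m"
      by (simp add: Q_def S_def sum.distrib sum_subtractf sum_distrib_left algebra_simps)
    finally show ?thesis .
  qed
  have Qk: "Suc k \<le> n \<longrightarrow> Q (Suc k) = real N * (2 * real (Suc k) - 1) \<and> Q k = (if k = 0 then 0 else real N * (2 * real k - 1))" for k
  proof (induction k)
    case 0
    then show ?case using Q0 Q1 by simp
  next
    case (Suc k)
    show ?case
    proof
      assume a: "Suc (Suc k) \<le> n"
      then have IH: "Q (Suc k) = real N * (2 * real (Suc k) - 1)" "Q k = (if k = 0 then 0 else real N * (2 * real k - 1))"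
        using Suc.IH by auto
      have "Q (k + 2) = 2 * Q (k + 1) - Q k + 2 * S (k + 1) + S (k + 2) + S k" by (rule rec)
      moreover have "S (k + 1) = 0" "S (k + 2) = 0" using a by (auto intro!: Sz simp: N_def)
      moreover have "S k = (if k = 0 then real N else 0)" using a S0 Sz[of k] by (auto simp: N_def)
      ultimately have "Q (Suc (Suc k)) = real N * (2 * real (Suc (Suc k)) - 1)"
        using IH by (cases "k = 0") (auto simp: algebra_simps)
      then show "Q (Suc (Suc k)) = real N * (2 * real (Suc (Suc k)) - 1) \<and> Q (Suc k) = (if Suc k = 0 then 0 else real N * (2 * real (Suc k) - 1))"
        using IH by simp
    qed
  qed
  have Qv: "Q k = real N * (2 * real k - 1)" if "k \<in> {1..n}" for k
    using Qk[of "k - 1"] that by (cases k) auto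
  have "0 \<le> (\<Sum>j<N. w j * (\<Sum>k=1..n. u k * (1 - cos (real k * xs j))))"
    by (rule sum_nonneg, rule mult_nonneg_nonneg) (use wpos G in auto)
  also have "\<dots> = (\<Sum>k=1..n. u k * Q k)"
    by (simp add: Q_def sum_distrib_left sum_distrib_right mult_ac sum.swap[of _ "{..<N}"])
  also have "\<dots> = real N * (\<Sum>k=1..n. (2 * real k - 1) * u k)"
    by (simp add: Qv sum_distrib_left mult_ac)
  finally show ?thesis using Np by (simp add: zero_le_mult_iff)
qed


lemma exp_B0:
  assumes "q holomorphic_on ball 0 1" "\<And>z. z \<in> ball 0 1 \<Longrightarrow> Re (q z) \<le> 0"
  shows "(\<lambda>z. exp (q z)) \<in> B0"
  using assms by (auto simp: B0_def intro!: holomorphic_intros)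

lemma tc_uminus:
  assumes "h holomorphic_on ball 0 1"
  shows "taylor_coeff k (\<lambda>z. - h z) = - taylor_coeff k h"
  using higher_deriv_uminus[OF assms, of 0 k] by (simp add: taylor_coeff_def)

lemma tc_diff:
  assumes "h holomorphic_on ball 0 1" "g holomorphic_on ball 0 1"
  shows "taylor_coeff k (\<lambda>z. h z - g z) = taylor_coeff k h - taylor_coeff k g"
  using higher_deriv_diff[OF assms, of 0 k] by (simp add: taylor_coeff_def diff_divide_distrib)

lemma tc_deriv: "taylor_coeff k (deriv h) = of_nat (Suc k) * taylor_coeff (Suc k) h"
proof -
  have "(deriv ^^ k) (deriv h) = (deriv ^^ Suc k) h" by (simp add: funpow_swap1)
  moreover have "fact (Suc k) = (of_nat (Suc k) :: complex) * fact k" by (rule fact_Suc)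
  ultimately show ?thesis unfolding taylor_coeff_def
    by (simp del: of_nat_Suc fact_Suc)
qed

lemma tc_0: "taylor_coeff 0 f = f 0" by (simp add: taylor_coeff_def)

lemma tc_mult':
  assumes "F holomorphic_on ball 0 1" "G holomorphic_on ball 0 1"
  shows "taylor_coeff n (\<lambda>z. F z * G z) = (\<Sum>k=0..n. taylor_coeff k G * taylor_coeff (n-k) F)"
proof -
  have "(\<lambda>z. F z * G z) = (\<lambda>z. G z * F z)" by (simp add: mult.commute)
  then show ?thesis using tc_mult[OF assms(2,1), of n] by simp
qed

lemma poly_B0:
  assumes "n \<ge> 1"
  shows "(\<lambda>z::complex. (1 + z ^ n) / 2) \<in> B0" "M n (\<lambda>z::complex. (1 + z ^ n) / 2) = 1/2"
proof -
  show "(\<lambda>z::complex. (1 + z ^ n) / 2) \<in> B0"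
    unfolding B0_def
  proof (intro CollectI conjI ballI)
    show "(\<lambda>z::complex. (1 + z ^ n) / 2) holomorphic_on ball 0 1" by (intro holomorphic_intros) auto
  next
    fix z :: complex assume "z \<in> ball 0 1"
    then have z1: "norm z < 1" by simp
    have zn: "norm (z ^ n) < 1" using z1 assms by (simp add: norm_power power_less_one_iff)
    have "norm (1 + z ^ n) \<ge> 1 - norm (z ^ n)" using norm_triangle_ineq2[of 1 "- (z ^ n)"] by simp
    then have "norm (1 + z ^ n) > 0" using zn by linarith
    then show "0 < norm ((1 + z ^ n) / 2)" by (simp add: norm_divide)
    have "norm (1 + z ^ n) \<le> 1 + norm (z ^ n)" using norm_triangle_ineq[of 1 "z ^ n"] by simp
    then show "norm ((1 + z ^ n) / 2) \<le> 1" using zn by (simp add: norm_divide)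
  qed
  have "(deriv ^^ n) (\<lambda>z::complex. (1 + z ^ n) / 2) 0 = (deriv ^^ n) (\<lambda>z::complex. (\<lambda>_. 1/2) z + (1/2) * (z - 0) ^ n) 0"
    by (simp add: add_divide_distrib)
  also have "\<dots> = (deriv ^^ n) (\<lambda>_. 1/2) 0 + (deriv ^^ n) (\<lambda>z::complex. (1/2) * (z - 0) ^ n) 0"
    by (rule higher_deriv_add[where S=UNIV]) (auto intro!: holomorphic_intros)
  also have "(deriv ^^ n) (\<lambda>z::complex. (1/2) * (z - 0) ^ n) 0 = (1/2) * (deriv ^^ n) (\<lambda>w::complex. (w - 0) ^ n) 0"
    by (rule higher_deriv_cmult[where A=UNIV]) (auto intro!: holomorphic_intros)
  also have "(deriv ^^ n) (\<lambda>_. 1/2::complex) 0 = 0" using assms by simp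
  also have "(deriv ^^ n) (\<lambda>w::complex. (w - 0) ^ n) 0 = fact n"
    by (simp only: higher_deriv_power) (simp add: pochhammer_fact)
  finally have "(deriv ^^ n) (\<lambda>z::complex. (1 + z ^ n) / 2) 0 = (1/2) * fact n" by simp
  then have "taylor_coeff n (\<lambda>z::complex. (1 + z ^ n) / 2) = 1/2"
    by (simp add: taylor_coeff_def)
  then show "M n (\<lambda>z::complex. (1 + z ^ n) / 2) = 1/2"
    unfolding M_def by (simp only:) simp
qed



theorem lemma9:
  fixes n :: nat and f :: "complex \<Rightarrow> complex"
  assumes "extremal n f"
    and "Im (taylor_coeff 0 f) = 0" and "Re (taylor_coeff 0 f) > 0"
  shows "Re (taylor_coeff 0 f) \<ge> exp (- 2 * real n)"
proof -
  have fB: "f \<in> B0" and fmax: "\<And>F. F \<in> B0 \<Longrightarrow> M n F \<le> M n f"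
    using assms(1) by (auto simp: extremal_def)
  have fh: "f holomorphic_on ball 0 1" using fB by (simp add: B0_def)
  have fnz: "\<And>z. z \<in> ball 0 1 \<Longrightarrow> f z \<noteq> 0" using fB by (auto simp: B0_def)
  define a0 where "a0 = Re (f 0)"
  have a0p: "a0 > 0" using assms(3) by (simp add: a0_def tc_0)
  have f0: "f 0 = of_real a0" using assms(2) by (simp add: a0_def tc_0 complex_eq_iff)
  show ?thesis
  proof (cases "n = 0")
    case True
    have "(\<lambda>z::complex. exp 0) \<in> B0" by (rule exp_B0) auto
    then have "M n (\<lambda>z. exp 0) \<le> M n f" by (rule fmax)
    then have "1 \<le> a0" using True by (simp add: M_def tc_0 a0_def)
    then show ?thesis using True by (simp add: tc_0 a0_def)
  next
    case False
    then have n1: "n \<ge> 1" by simp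
    obtain g where gh: "g holomorphic_on ball 0 1" and fg: "\<And>z. z \<in> ball 0 1 \<Longrightarrow> f z = exp (g z)"
      using contractible_imp_holomorphic_log[OF fh convex_imp_contractible[OF convex_ball] fnz] by blast
    define h where "h = (\<lambda>z. g z - g 0 + of_real (ln a0))"
    have hh: "h holomorphic_on ball 0 1" unfolding h_def using gh by (intro holomorphic_intros)
    have fe: "f z = exp (h z)" if "z \<in> ball 0 1" for z
    proof -
      have "exp (h z) = exp (g z) / exp (g 0) * exp (of_real (ln a0))" by (simp add: h_def exp_diff exp_add)
      also have "exp (of_real (ln a0)) = of_real a0" using a0p by (simp add: exp_of_real)
      also have "exp (g 0) = of_real a0" using fg[of 0] f0 by simp
      finally show ?thesis using fg[OF that] a0p by simp
    qed
    have h0: "h 0 = of_real (ln a0)" by (simp add: h_def)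
    have Reh: "Re (h z) \<le> 0" if "z \<in> ball 0 1" for z
    proof -
      have "norm (f z) \<le> 1" using fB that by (simp add: B0_def)
      then have "exp (Re (h z)) \<le> 1" using fe[OF that] by simp
      then show ?thesis by simp
    qed
    define a where "a = (\<lambda>k. taylor_coeff k f)"
    define b where "b = (\<lambda>k. taylor_coeff k h)"
    define C where "C = (\<lambda>k. b k * a (n - k))"
    define u where "u = (\<lambda>k. Re (C k))"
    define c where "c = - ln a0"
    have b0: "b 0 = - of_real c" by (simp add: b_def tc_0 h0 c_def)
    have mem1: "(\<lambda>z. exp (h z + of_real s * h z)) \<in> B0" if s: "0 < s" "s < 1" for s
    proof (rule exp_B0)
      show "(\<lambda>z. h z + of_real s * h z) holomorphic_on ball 0 1" using hh by (intro holomorphic_intros)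
      fix z :: complex assume z: "z \<in> ball 0 1"
      have "Re (h z + of_real s * h z) = (1 + s) * Re (h z)" by (simp add: algebra_simps)
      also have "\<dots> \<le> 0" using Reh[OF z] s by (simp add: mult_nonneg_nonpos)
      finally show "Re (h z + of_real s * h z) \<le> 0" .
    qed
    have V1: "Re (taylor_coeff n (\<lambda>z. f z * h z)) \<le> 0"
      by (rule variation[OF assms(1) hh fe hh zero_less_one mem1])
    have hmh: "(\<lambda>z. - h z) holomorphic_on ball 0 1" using hh by (intro holomorphic_intros)
    have mem2: "(\<lambda>z. exp (h z + of_real s * - h z)) \<in> B0" if s: "0 < s" "s < 1" for s
    proof (rule exp_B0)
      show "(\<lambda>z. h z + of_real s * - h z) holomorphic_on ball 0 1" using hh by (intro holomorphic_intros)
      fix z :: complex assume z: "z \<in> ball 0 1"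
      have "Re (h z + of_real s * - h z) = (1 - s) * Re (h z)" by (simp add: algebra_simps)
      also have "\<dots> \<le> 0" using Reh[OF z] s by (simp add: mult_nonneg_nonpos)
      finally show "Re (h z + of_real s * - h z) \<le> 0" .
    qed
    have V2: "Re (taylor_coeff n (\<lambda>z. f z * - h z)) \<le> 0"
      by (rule variation[OF assms(1) hh fe hmh zero_less_one mem2])
    have S1: "taylor_coeff n (\<lambda>z. f z * h z) = (\<Sum>k=0..n. C k)"
      using tc_mult'[OF fh hh, of n] by (simp add: C_def a_def b_def)
    have S2: "taylor_coeff n (\<lambda>z. f z * - h z) = - (\<Sum>k=0..n. C k)"
      using tc_mult'[OF fh hmh, of n] by (simp add: C_def a_def b_def tc_uminus[OF hh] sum_negf)
    have sumu: "(\<Sum>k=0..n. u k) = 0"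
      using V1 V2 S1 S2 by (simp add: u_def)
    have V3: "Re (\<Sum>k=0..n. (exp (\<i> * of_real (real k * y)) - 1) * C k) \<le> 0" for y :: real
    proof -
      define e where "e = exp (\<i> * of_real y)"
      have ne: "norm e = 1" by (simp add: e_def)
      have hx: "(\<lambda>z. h (e * z)) holomorphic_on ball 0 1"
      proof -
        have "(h \<circ> (\<lambda>z. e * z)) holomorphic_on ball 0 1"
          by (rule holomorphic_on_compose_gen[OF _ hh]) (auto intro!: holomorphic_intros simp: norm_mult ne)
        then show ?thesis by (simp add: o_def)
      qed
      define d where "d = (\<lambda>z. h (e * z) - h z)"
      have dh: "d holomorphic_on ball 0 1" unfolding d_def using hx hh by (intro holomorphic_intros)
      have mem3: "(\<lambda>z. exp (h z + of_real s * d z)) \<in> B0" if s: "0 < s" "s < 1" for s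
      proof (rule exp_B0)
        show "(\<lambda>z. h z + of_real s * d z) holomorphic_on ball 0 1" using hh dh by (intro holomorphic_intros)
        fix z :: complex assume z: "z \<in> ball 0 1"
        have ez: "e * z \<in> ball 0 1" using z by (simp add: norm_mult ne)
        have "Re (h z + of_real s * d z) = (1 - s) * Re (h z) + s * Re (h (e * z))"
          by (simp add: d_def algebra_simps)
        also have "\<dots> \<le> 0" using Reh[OF z] Reh[OF ez] s
          by (intro add_nonpos_nonpos mult_nonneg_nonpos) auto
        finally show "Re (h z + of_real s * d z) \<le> 0" .
      qed
      have V: "Re (taylor_coeff n (\<lambda>z. f z * d z)) \<le> 0"
        by (rule variation[OF assms(1) hh fe dh zero_less_one mem3])
      have tcd: "taylor_coeff k d = (exp (\<i> * of_real (real k * y)) - 1) * b k" for k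
      proof -
        have "taylor_coeff k d = taylor_coeff k (\<lambda>z. h (e * z)) - taylor_coeff k h"
          unfolding d_def by (rule tc_diff[OF hx hh])
        also have "\<dots> = e ^ k * b k - b k" by (simp add: tc_rot[OF hh ne] b_def)
        also have "e ^ k = exp (\<i> * of_real (real k * y))"
          unfolding e_def by (simp add: exp_of_nat_mult[symmetric] mult_ac)
        finally show ?thesis by (simp add: algebra_simps)
      qed
      have "taylor_coeff n (\<lambda>z. f z * d z) = (\<Sum>k=0..n. (exp (\<i> * of_real (real k * y)) - 1) * C k)"
        using tc_mult'[OF fh dh, of n] by (simp add: tcd C_def a_def mult_ac)
      then show ?thesis using V by simp
    qed
    have eqRe: "Re (\<Sum>k=0..n. (exp (\<i> * of_real (real k * y)) - 1) * C k)
        = (\<Sum>k=0..n. (cos (real k * y) - 1) * u k - sin (real k * y) * Im (C k))" for y :: real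
      by (simp add: Re_sum Re_exp Im_exp u_def algebra_simps)
    have rot: "(\<Sum>k=0..n. (cos (real k * x) - 1) * u k) \<le> 0" for x :: real
    proof -
      have "(\<Sum>k=0..n. (cos (real k * x) - 1) * u k - sin (real k * x) * Im (C k))
          + (\<Sum>k=0..n. (cos (real k * (-x)) - 1) * u k - sin (real k * (-x)) * Im (C k))
          = 2 * (\<Sum>k=0..n. (cos (real k * x) - 1) * u k)"
        by (simp add: sum.distrib[symmetric] sum_distrib_left algebra_simps)
      moreover have "(\<Sum>k=0..n. (cos (real k * x) - 1) * u k - sin (real k * x) * Im (C k)) \<le> 0"
        using V3[of x] eqRe[of x] by simp
      moreover have "(\<Sum>k=0..n. (cos (real k * (-x)) - 1) * u k - sin (real k * (-x)) * Im (C k)) \<le> 0"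
        using V3[of "-x"] eqRe[of "-x"] by simp
      ultimately show ?thesis by simp
    qed
    have G: "(\<Sum>k=1..n. u k * (1 - cos (real k * x))) \<ge> 0" for x :: real
    proof -
      have "(\<Sum>k=0..n. (cos (real k * x) - 1) * u k) = (cos (real 0 * x) - 1) * u 0 + (\<Sum>k=Suc 0..n. (cos (real k * x) - 1) * u k)"
        by (rule sum.atLeast_Suc_atMost) simp
      then have "(\<Sum>k=1..n. (cos (real k * x) - 1) * u k) \<le> 0" using rot[of x] by simp
      then have "- (\<Sum>k=1..n. (cos (real k * x) - 1) * u k) \<ge> 0" by simp
      also have "- (\<Sum>k=1..n. (cos (real k * x) - 1) * u k) = (\<Sum>k=1..n. u k * (1 - cos (real k * x)))"
        by (simp add: sum_negf[symmetric] algebra_simps)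
      finally show ?thesis .
    qed
    have TK: "(\<Sum>k=1..n. (2 * real k - 1) * u k) \<ge> 0"
      by (rule trig_key) (rule G)
    have dfe: "deriv f z = deriv h z * f z" if z: "z \<in> ball 0 1" for z
    proof -
      have "((\<lambda>z. exp (h z)) has_field_derivative exp (h z) * deriv h z) (at z)"
        using holomorphic_derivI[OF hh open_ball z] by (auto intro!: derivative_eq_intros)
      then have "(f has_field_derivative exp (h z) * deriv h z) (at z)"
        by (rule has_field_derivative_transform_within_open[where S = "ball 0 1"]) (use z fe in auto)
      then have "deriv f z = exp (h z) * deriv h z" by (rule DERIV_imp_deriv)
      then show ?thesis using fe[OF z] by (simp add: mult.commute)
    qed
    have "(deriv ^^ (n-1)) (deriv f) 0 = (deriv ^^ (n-1)) (\<lambda>z. deriv h z * f z) 0"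
      by (rule higher_deriv_transform_within_open[where S="ball 0 1"])
         (auto intro!: holomorphic_intros holomorphic_deriv hh fh simp: dfe)
    then have "taylor_coeff (n-1) (deriv f) = taylor_coeff (n-1) (\<lambda>z. deriv h z * f z)"
      by (simp add: taylor_coeff_def)
    moreover have "taylor_coeff (n-1) (deriv f) = of_nat n * a n"
      using tc_deriv[of "n-1" f] n1 by (simp add: a_def)
    moreover have "taylor_coeff (n-1) (\<lambda>z. deriv h z * f z) = (\<Sum>i=0..n-1. taylor_coeff i (deriv h) * taylor_coeff (n-1-i) f)"
      by (rule tc_mult) (auto intro!: holomorphic_deriv hh fh)
    moreover have "(\<Sum>i=0..n-1. taylor_coeff i (deriv h) * taylor_coeff (n-1-i) f) = (\<Sum>k=1..n. of_nat k * C k)"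
    proof -
      obtain m where m: "n = Suc m" using n1 by (cases n) auto
      have "(\<Sum>k=Suc 0..Suc m. of_nat k * C k) = (\<Sum>i=0..m. of_nat (Suc i) * C (Suc i))"
        by (rule sum.shift_bounds_cl_Suc_ivl)
      also have "\<dots> = (\<Sum>i=0..m. taylor_coeff i (deriv h) * taylor_coeff (m-i) f)"
        by (rule sum.cong[OF refl]) (simp add: tc_deriv C_def a_def b_def m mult_ac)
      finally show ?thesis using m by simp
    qed
    ultimately have deriv_id: "of_nat n * a n = (\<Sum>k=1..n. of_nat k * C k)" by simp
    have "M n (\<lambda>z::complex. (1 + z ^ n) / 2) \<le> M n f" using poly_B0[OF n1] by (intro fmax) 
    then have A: "Re (a n) \<ge> 1/2" using poly_B0(2)[OF n1] by (simp add: M_def a_def)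
    have u0: "u 0 = - c * Re (a n)" by (simp add: u_def C_def b0)
    have su1: "(\<Sum>k=1..n. u k) = c * Re (a n)"
      using sumu sum.atLeast_Suc_atMost[of 0 n u] u0 by simp
    have su2: "(\<Sum>k=1..n. real k * u k) = real n * Re (a n)"
    proof -
      have "Re (of_nat n * a n) = Re (\<Sum>k=1..n. of_nat k * C k)" using deriv_id by simp
      then show ?thesis by (simp add: u_def)
    qed
    have "(\<Sum>k=1..n. (2 * real k - 1) * u k) = 2 * (\<Sum>k=1..n. real k * u k) - (\<Sum>k=1..n. u k)"
      by (simp add: algebra_simps sum_subtractf sum_distrib_left)
    then have "0 \<le> 2 * real n * Re (a n) - c * Re (a n)" using TK su1 su2 by simp
    then have "c * Re (a n) \<le> (2 * real n) * Re (a n)" by simp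
    then have "c \<le> 2 * real n" using A by (simp add: mult_le_cancel_right)
    then have "- 2 * real n \<le> ln a0" by (simp add: c_def)
    then have "exp (- 2 * real n) \<le> exp (ln a0)" by (simp only: exp_le_cancel_iff)
    also have "exp (ln a0) = a0" using a0p by simp
    also have "a0 = Re (taylor_coeff 0 f)" by (simp add: a0_def tc_0)
    finally show ?thesis .
  qed
qed


end
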